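(* Let $W(x,x')=\tfrac12Px\cdot x-Lx\cdot x'+\tfrac12Qx'\cdot x'$ with $P,Q$ real symmetric and $L$ real invertible, let $m\in\mathbb{Z}$ with $m$ even iff $\det L>0$, and assume $\det(S_W-I)\neq0$. Set $\nu(\widehat S_{W,m})=m-\operatorname{Inert}(P+Q-L-L^T)$. Then $$\nu(\widehat S_{W,m})\equiv n+\tfrac1\pi\arg\det(S_W-I)\pmod 2,$$ i.e. $\nu(\widehat S_{W,m})\equiv n \pmod 2$ if $\det(S_W-I)>0$ and $\nu(\widehat S_{W,m})\equiv n+1\pmod 2$ if $\det(S_W-I)<0$.
   Context: $S_W\in\operatorname{Sp}(n)$ is the symplectic matrix generated by $W$: $(x,p)=S_W(x',p')\iff p=\partial_xW(x,x'),\ p'=-\partial_{x'}W(x,x')$. $\widehat S_{W,m}$ is the quadratic Fourier transform $\widehat S_{W,m}\psi(x)=e^{-in\pi/4}(2\pi\hbar)^{-n/2}i^m\sqrt{|\det L|}\int e^{\frac i\hbar W(x,x')}\psi(x')d^nx'$. $\operatorname{Inert}A$ denotes the number of negative eigenvalues of a real symmetric matrix $A$; $\arg$ of a nonzero real number is $0$ if positive and $\pi$ if negative. *)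

theory Defs
  imports "HOL-Analysis.Analysis" "HOL-Computational_Algebra.Polynomial"
begin

definition genW :: "real^'n^'n \<Rightarrow> real^'n^'n \<Rightarrow> real^'n^'n \<Rightarrow> real^'n \<Rightarrow> real^'n \<Rightarrow> real" where
  "genW P L Q x x' = (1/2) * ((P *v x) \<bullet> x) - (L *v x) \<bullet> x' + (1/2) * ((Q *v x') \<bullet> x')"

definition pjoin :: "real^'n \<Rightarrow> real^'n \<Rightarrow> real^('n + 'n)" where
  "pjoin x p = (\<chi> i. case i of Inl j \<Rightarrow> x $ j | Inr j \<Rightarrow> p $ j)"

definition generated_by :: "real^('n+'n)^('n+'n) \<Rightarrow> real^'n^'n \<Rightarrow> real^'n^'n \<Rightarrow> real^'n^'n \<Rightarrow> bool" where
  "generated_by S P L Q \<longleftrightarrow>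
     (\<forall>x p x' p'. (S *v pjoin x' p' = pjoin x p) \<longleftrightarrow>
        (((\<lambda>y. genW P L Q y x') has_derivative (\<lambda>h. p \<bullet> h)) (at x) \<and>
         ((\<lambda>y. genW P L Q x y) has_derivative (\<lambda>h. - (p' \<bullet> h))) (at x')))"

definition charpoly :: "real^'n^'n \<Rightarrow> real poly" where
  "charpoly A = det (\<chi> i j. (if i = j then [:0, 1:] else 0) - [:A $ i $ j:])"

definition Inert :: "real^'n^'n \<Rightarrow> nat" where
  "Inert A = (\<Sum>r\<in>{r. r < 0 \<and> poly (charpoly A) r = 0}. order r (charpoly A))"

definition nu_index :: "int \<Rightarrow> real^'n^'n \<Rightarrow> real^'n^'n \<Rightarrow> real^'n^'n \<Rightarrow> int" where
  "nu_index m P L Q = m - int (Inert (P + Q - L - transpose L))"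

end

theory Submission
  imports Defs
begin


definition blk :: "real^'n^'n \<Rightarrow> real^'n^'n \<Rightarrow> real^'n^'n \<Rightarrow> real^'n^'n \<Rightarrow> real^('n+'n)^('n+'n)" where
  "blk A B C D = (\<chi> i j. case i of Inl a \<Rightarrow> (case j of Inl b \<Rightarrow> A$a$b | Inr b \<Rightarrow> B$a$b)
                               | Inr a \<Rightarrow> (case j of Inl b \<Rightarrow> C$a$b | Inr b \<Rightarrow> D$a$b))"

lemma pjoin_eq: "pjoin a b = pjoin c d \<longleftrightarrow> a = c \<and> b = d"
proof
  assume h: "pjoin a b = pjoin c d"
  have "\<And>j. a$j = c$j" "\<And>j. b$j = d$j"
    using h[unfolded pjoin_def vec_eq_iff] by (metis sum.simps(5) vec_lambda_beta, metis sum.simps(6) vec_lambda_beta)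
  thus "a = c \<and> b = d" by (simp add: vec_eq_iff)
qed simp

lemma pjoin_split: "v = pjoin (\<chi> j. v$Inl j) (\<chi> j. v$Inr j)"
  by (simp add: pjoin_def vec_eq_iff split: sum.split)

lemma pjoin_add: "pjoin a b + pjoin c d = pjoin (a+c) (b+d)"
  by (simp add: pjoin_def vec_eq_iff split: sum.split)

lemma pjoin_diff: "pjoin a b - pjoin c d = pjoin (a-c) (b-d)"
  by (simp add: pjoin_def vec_eq_iff split: sum.split)

lemma blk_mv: "blk A B C D *v pjoin x y = pjoin (A*v x + B*v y) (C*v x + D*v y)"
  unfolding vec_eq_iff
proof
  fix i :: "'a + 'a"
  have U: "(UNIV :: ('a+'a) set) = UNIV <+> UNIV" by simp
  show "(blk A B C D *v pjoin x y) $ i = pjoin (A*v x + B*v y) (C*v x + D*v y) $ i"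
    unfolding matrix_vector_mult_def blk_def pjoin_def
    by (cases i) (simp_all only: vec_lambda_beta U sum.Plus[OF finite finite], simp_all add: o_def)
qed

lemma blk_eqI:
  assumes "\<And>x y. M *v pjoin x y = pjoin (A*v x + B*v y) (C*v x + D*v y)"
  shows "M = blk A B C D"
  unfolding matrix_eq
proof
  fix v show "M *v v = blk A B C D *v v"
    by (subst (1 2) pjoin_split) (simp only: assms blk_mv)
qed

lemma blk_mult: "blk A B C D ** blk A' B' C' D' = blk (A**A' + B**C') (A**B' + B**D') (C**A' + D**C') (C**B' + D**D')"
  by (rule blk_eqI) (simp add: matrix_vector_mul_assoc[symmetric] blk_mv algebra_simps)

lemma blk_transpose: "transpose (blk A B C D) = blk (transpose A) (transpose C) (transpose B) (transpose D)"
  by (simp add: blk_def transpose_def vec_eq_iff split: sum.split)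

lemma blk_one: "blk (mat 1) 0 0 (mat 1) = mat 1"
  by (simp add: blk_def mat_def vec_eq_iff split: sum.split)



lemma map_sum_permutes:
  fixes q :: "'a \<Rightarrow> 'a"
  assumes "q permutes UNIV"
  shows "map_sum q (id::'b\<Rightarrow>'b) permutes UNIV"
proof -
  have "bij q" using assms by (simp add: permutes_univ bij_iff)
  then have i: "inj q" and s: "surj q" by (auto simp: bij_def)
  have "inj (map_sum q (id::'b\<Rightarrow>'b))"
  proof (rule injI)
    fix x y :: "'a+'b" assume h: "map_sum q id x = map_sum q id y"
    show "x = y"
    proof (cases x; cases y)
      fix a b assume "x = Inl a" "y = Inl b" then show ?thesis using h injD[OF i, of a b] by simp
    qed (use h in simp_all)
  qed
  moreover have "surj (map_sum q (id::'b\<Rightarrow>'b))"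
    unfolding surj_def
  proof
    fix y :: "'a+'b" show "\<exists>x. y = map_sum q id x"
    proof (cases y)
      case (Inl b) then obtain a where "b = q a" using s by (metis surjD)
      then show ?thesis using Inl by (intro exI[of _ "Inl a"]) simp
    next
      case (Inr b) then show ?thesis by (intro exI[of _ "Inr b"]) simp
    qed
  qed
  ultimately have "bij (map_sum q (id::'b\<Rightarrow>'b))" by (simp add: bij_def)
  then show ?thesis by (simp add: permutes_univ bij_iff)
qed

lemma sign_map_sum_id:
  fixes q :: "'a::finite \<Rightarrow> 'a"
  assumes "q permutes UNIV"
  shows "sign (map_sum q (id::'b::finite\<Rightarrow>'b)) = sign q"
  using assms finite
proof (induct rule: permutes_induct)
  case id
  have e: "map_sum id id = (id :: 'a+'b \<Rightarrow> _)" by (rule ext, case_tac x) auto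
  show ?case apply (subst e) apply (subst sign_id) apply (subst sign_id) apply (rule refl) done
next
  case (swap a b p)
  have t1: "Transposition.transpose (Inl a) (Inl b) (Inl z :: 'a+'b) = Inl (Transposition.transpose a b z)" for z
    unfolding Transposition.transpose_def by simp
  have t2: "Transposition.transpose (Inl a) (Inl b) (Inr z :: 'a+'b) = Inr z" for z
    unfolding Transposition.transpose_def by simp
  have e: "map_sum (Transposition.transpose a b \<circ> p) (id::'b\<Rightarrow>'b) = Transposition.transpose (Inl a) (Inl b) \<circ> map_sum p id"
  proof
    fix x :: "'a+'b" show "map_sum (Transposition.transpose a b \<circ> p) id x = (Transposition.transpose (Inl a) (Inl b) \<circ> map_sum p id) x"
      by (cases x) (simp_all only: t1 t2 map_sum.simps o_apply id_apply)
  qed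
  have pp: "permutation (map_sum p (id::'b\<Rightarrow>'b))"
    unfolding permutation_permutes by (intro exI[of _ UNIV]) (simp add: map_sum_permutes swap(5))
  have pq: "permutation p" unfolding permutation_permutes by (intro exI[of _ UNIV]) (simp add: swap(5))
  have "sign (Transposition.transpose (Inl a) (Inl b) \<circ> map_sum p (id::'b\<Rightarrow>'b)) = - sign p"
    using sign_compose[OF permutation_swap_id pp] swap(3,4) sign_swap_id[of "Inl a :: 'a+'b" "Inl b"] by simp
  moreover have "sign (Transposition.transpose a b \<circ> p) = - sign p"
    using sign_compose[OF permutation_swap_id pq] swap(3) sign_swap_id[of a b] by simp
  ultimately show ?case by (simp only: e)
qed



lemma det_blk_upper_id:
  fixes A B :: "real^'n^'n"
  shows "det (blk A B 0 (mat 1)) = det A"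
proof -
  let ?M = "blk A B 0 (mat 1)"
  let ?U = "UNIV :: ('n+'n) set"
  let ?PU = "{p. p permutes ?U}"
  let ?F = "{p. p permutes ?U \<and> (\<forall>a. p (Inr a) = Inr a)}"
  let ?G = "(\<lambda>q. map_sum q (id::'n\<Rightarrow>'n)) ` {q. q permutes (UNIV::'n set)}"
  let ?t = "\<lambda>p. of_int (sign p) * (\<Prod>i\<in>?U. ?M$i$p i)"
  have zero: "?t p = 0" if "p \<in> ?PU - ?F" for p
  proof -
    from that obtain a where a: "p (Inr a) \<noteq> Inr a" by auto
    have "?M $ Inr a $ p (Inr a) = 0"
      using a by (cases "p (Inr a)") (auto simp: blk_def mat_def)
    then have "(\<Prod>i\<in>?U. ?M$i$p i) = 0" by (intro prod_zero) auto
    then show ?thesis by simp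
  qed
  have "det ?M = sum ?t ?F"
    unfolding det_def by (rule sum.mono_neutral_right[OF _ _ ballI[OF zero]]) (auto simp: finite_permutations)
  also have "?F = ?G"
  proof
    show "?F \<subseteq> ?G"
    proof
      fix p assume pF: "p \<in> ?F"
      then have pp: "p permutes ?U" and fx: "\<And>a. p (Inr a) = Inr a" by auto
      have ip: "inj p" using permutes_inj[OF pp] .
      have isl: "\<exists>b. p (Inl a) = Inl b" for a
      proof (cases "p (Inl a)")
        case (Inr b)
        then have "p (Inl a) = p (Inr b)" using fx by simp
        then show ?thesis using injD[OF ip] by blast
      qed auto
      define q where "q a = projl (p (Inl a))" for a
      have pq: "p (Inl a) = Inl (q a)" for a using isl[of a] by (auto simp: q_def)
      have peq: "p = map_sum q id"
      proof
        fix x show "p x = map_sum q id x" by (cases x) (simp_all add: pq fx)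
      qed
      have "q permutes UNIV"
        unfolding permutes_univ
      proof
        fix y
        obtain x where x: "p x = Inl y" using permutes_surj[OF pp] by (metis surj_def)
        then obtain a where xa: "x = Inl a" using fx by (cases x) auto
        have qa: "q a = y" using x xa pq by simp
        show "\<exists>!x. q x = y"
        proof (rule ex1I[of _ a])
          show "q a = y" by (fact qa)
          fix a' assume "q a' = y"
          then have "p (Inl a') = p (Inl a)" using pq qa by simp
          then show "a' = a" using injD[OF ip] by blast
        qed
      qed
      then show "p \<in> ?G" using peq by blast
    qed
  next
    show "?G \<subseteq> ?F"
      using map_sum_permutes by fastforce
  qed
  also have "sum ?t (?G) =
      sum (\<lambda>q. ?t (map_sum q (id::'n\<Rightarrow>'n))) {q. q permutes (UNIV::'n set)}"
  proof (rule sum.reindex[unfolded o_def])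
    show "inj_on (\<lambda>q. map_sum q (id::'n\<Rightarrow>'n)) {q. q permutes (UNIV::'n set)}"
      unfolding inj_on_def
    proof (intro ballI impI)
      fix q q' :: "'n \<Rightarrow> 'n" assume eq: "map_sum q id = map_sum q' (id::'n\<Rightarrow>'n)"
      show "q = q'"
      proof
        fix a from fun_cong[OF eq, of "Inl a"] show "q a = q' a" by simp
      qed
    qed
  qed
  also have "\<dots> = sum (\<lambda>q. of_int (sign q) * (\<Prod>a\<in>UNIV. A$a$q a)) {q. q permutes (UNIV::'n set)}"
  proof (rule sum.cong[OF refl])
    fix q :: "'n \<Rightarrow> 'n" assume "q \<in> {q. q permutes UNIV}"
    then have qp: "q permutes UNIV" by simp
    have "(\<Prod>i\<in>?U. ?M$i$map_sum q id i) = (\<Prod>a\<in>UNIV. A$a$q a)"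
      unfolding UNIV_Plus_UNIV[symmetric] prod.Plus[OF finite finite]
      by (simp add: blk_def mat_def o_def)
    then show "?t (map_sum q id) = of_int (sign q) * (\<Prod>a\<in>UNIV. A$a$q a)"
      using sign_map_sum_id[OF qp, where 'b='n] by simp
  qed
  also have "\<dots> = det A" unfolding det_def ..
  finally show ?thesis .
qed



lemma det_mat_const: "det (mat c :: real^'n^'n) = c ^ CARD('n)"
  by (simp add: det_diagonal mat_def)

lemma mat_neg_one_mult: "(- mat 1) ** (A::real^'n^'m) = - A"
  using scalar_matrix_assoc[of "-1" "mat 1 :: real^'m^'m" A] by simp

lemma neg_I_sq: "(- mat 1 :: real^'n^'n) ** (- mat 1) = mat 1"
  by (simp add: mat_neg_one_mult)

lemma det_neg: "det (- A :: real^'n^'n) = (-1) ^ CARD('n) * det A"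
proof -
  have "(- mat 1 :: real^'n^'n) = mat (-1)" by (simp add: vec_eq_iff mat_def)
  then show ?thesis by (metis mat_neg_one_mult det_mul det_mat_const)
qed

lemma transpose_zero': "transpose (0::real^'n^'m) = 0"
  by (simp add: transpose_def vec_eq_iff)

lemma det_blk_lower_id:
  fixes A C :: "real^'n^'n"
  shows "det (blk A 0 C (mat 1)) = det A"
  by (metis blk_transpose det_blk_upper_id det_transpose transpose_mat transpose_zero')

lemma det_blk_id_D:
  fixes D :: "real^'n^'n"
  shows "det (blk (mat 1) 0 0 D) = det D"
proof -
  let ?J = "blk 0 (mat 1) (mat 1) 0 :: real^('n+'n)^('n+'n)"
  have JJ: "?J ** ?J = mat 1" by (simp add: blk_mult blk_one)
  have "?J ** blk D 0 0 (mat 1) ** ?J = blk (mat 1) 0 0 D" by (simp add: blk_mult)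
  then have "det (blk (mat 1) 0 0 D) = det ?J * det D * det ?J"
    by (metis det_mul det_blk_upper_id)
  also have "\<dots> = det (?J ** ?J) * det D" by (simp add: det_mul)
  finally show ?thesis by (simp add: JJ)
qed

lemma det_blk_lower:
  fixes A C D :: "real^'n^'n"
  shows "det (blk A 0 C D) = det A * det D"
proof -
  have "blk A 0 C (mat 1) ** blk (mat 1) 0 0 D = blk A 0 C D" by (simp add: blk_mult)
  then show ?thesis by (metis det_mul det_blk_lower_id det_blk_id_D)
qed

lemma det_J: "det (blk 0 (mat 1) (mat 1) 0 :: real^('n::finite+'n)^('n+'n)) = (-1) ^ CARD('n)"
proof -
  let ?I = "mat 1 :: real^'n^'n"
  have e1: "blk ?I ?I 0 ?I ** blk ?I 0 (- ?I) ?I ** blk ?I ?I 0 ?I = blk 0 ?I (- ?I) 0"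
    by (simp add: blk_mult)
  have e2: "blk 0 ?I (- ?I) 0 ** blk (- ?I) 0 0 ?I = blk 0 ?I ?I 0"
    by (simp add: blk_mult neg_I_sq)
  have d1: "det (blk 0 ?I (- ?I) 0) = 1"
    using e1[symmetric] by (simp add: det_mul det_blk_upper_id det_blk_lower)
  have "det (blk (- ?I) 0 0 ?I) = (-1) ^ CARD('n)"
    by (simp add: det_blk_upper_id det_neg)
  then show ?thesis using e2[symmetric] d1 by (simp add: det_mul)
qed



lemma mv_inner_transpose: "(A *v h) \<bullet> x = h \<bullet> (transpose A *v (x::real^'n))"
  by (simp add: dot_lmul_matrix[symmetric] inner_commute)

lemma mv_has_derivative[derivative_intros]:
  "(g has_derivative g') F \<Longrightarrow> ((\<lambda>y. (A::real^'n^'m) *v g y) has_derivative (\<lambda>h. A *v g' h)) F"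
  by (rule bounded_linear.has_derivative[OF matrix_vector_mul_bounded_linear])

lemma sym_inner:
  assumes "transpose P = P"
  shows "x \<bullet> (P *v y) = y \<bullet> (P *v (x::real^'n))"
proof -
  have "x \<bullet> (P *v y) = (x v* P) \<bullet> y" by (simp add: dot_lmul_matrix)
  also have "x v* P = transpose P *v x" by simp
  finally show ?thesis using assms by (simp add: inner_commute)
qed

lemma genW_dx:
  fixes P L Q :: "real^'n^'n"
  assumes "transpose P = P"
  shows "((\<lambda>y. genW P L Q y x') has_derivative (\<lambda>h. (P *v x - transpose L *v x') \<bullet> h)) (at x)"
  unfolding genW_def
  apply (rule has_derivative_eq_rhs)
   apply (rule derivative_eq_intros refl | simp)+
  apply (rule ext)
  using sym_inner[OF assms, of x] dot_lmul_matrix[of x' L]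
  apply (simp add: inner_diff_right inner_commute)
  done

lemma genW_dx':
  fixes P L Q :: "real^'n^'n"
  assumes "transpose Q = Q"
  shows "((\<lambda>y. genW P L Q x y) has_derivative (\<lambda>h. - ((L *v x - Q *v x') \<bullet> h))) (at x')"
  unfolding genW_def
  apply (rule has_derivative_eq_rhs)
   apply (rule derivative_eq_intros refl | simp)+
  apply (rule ext)
  using sym_inner[OF assms, of x'] 
  apply (simp add: inner_diff_right inner_commute)
  done



lemma mm_ldiff: "(A::real^'n^'m) ** (B - C) = A ** B - A ** C"
  by (simp add: matrix_matrix_mult_def vec_eq_iff algebra_simps sum_subtractf)
lemma mm_rdiff: "((A::real^'n^'m) - B) ** C = A ** C - B ** C"
  by (simp add: matrix_matrix_mult_def vec_eq_iff algebra_simps sum_subtractf)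
lemma mm_ladd: "(A::real^'n^'m) ** (B + C) = A ** B + A ** C"
  by (simp add: matrix_matrix_mult_def vec_eq_iff algebra_simps sum.distrib)
lemma mm_radd: "((A::real^'n^'m) + B) ** C = A ** C + B ** C"
  by (simp add: matrix_matrix_mult_def vec_eq_iff algebra_simps sum.distrib)

lemma S_minus_I:
  fixes P L Q Li :: "real^'n^'n" and S :: "real^('n+'n)^('n+'n)"
  assumes P: "transpose P = P" and Q: "transpose Q = Q"
    and LLi: "L ** Li = mat 1"
    and gen: "generated_by S P L Q"
  shows "S - mat 1 = blk (Li ** Q - mat 1) Li (P ** Li ** Q - transpose L) (P ** Li - mat 1)"
proof (rule blk_eqI)
  fix x' p' :: "real^'n"
  define x where "x = Li *v (p' + Q *v x')"
  define p where "p = P *v x - transpose L *v x'"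
  have Lx: "L *v x = p' + Q *v x'"
    unfolding x_def matrix_vector_mul_assoc LLi by simp
  have d1: "((\<lambda>y. genW P L Q y x') has_derivative (\<lambda>h. p \<bullet> h)) (at x)"
    unfolding p_def by (rule genW_dx[OF P])
  have d2: "((\<lambda>y. genW P L Q x y) has_derivative (\<lambda>h. - (p' \<bullet> h))) (at x')"
    using genW_dx'[OF Q, where x=x and x'=x' and L=L and P=P] by (simp add: Lx)
  have "S *v pjoin x' p' = pjoin x p"
    using gen d1 d2 unfolding generated_by_def by blast
  then have "(S - mat 1) *v pjoin x' p' = pjoin (x - x') (p - p')"
    by (simp add: matrix_vector_mult_diff_rdistrib pjoin_diff)
  also have "\<dots> = pjoin ((Li ** Q - mat 1) *v x' + Li *v p') ((P ** Li ** Q - transpose L) *v x' + (P ** Li - mat 1) *v p')"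
    unfolding pjoin_eq x_def p_def
    by (simp add: algebra_simps matrix_vector_mul_assoc[symmetric])
  finally show "(S - mat 1) *v pjoin x' p' = pjoin ((Li ** Q - mat 1) *v x' + Li *v p') ((P ** Li ** Q - transpose L) *v x' + (P ** Li - mat 1) *v p')" .
qed

lemma det_S_minus_I:
  fixes P L Q Li :: "real^'n^'n" and S :: "real^('n+'n)^('n+'n)"
  assumes P: "transpose P = P" and Q: "transpose Q = Q"
    and LLi: "L ** Li = mat 1" and LiL: "Li ** L = mat 1"
    and gen: "generated_by S P L Q"
  shows "det (S - mat 1) = (-1) ^ CARD('n) * det Li * det (P + Q - L - transpose L)"
proof -
  let ?I = "mat 1 :: real^'n^'n"
  let ?A = "Li ** Q - ?I" and ?B = Li and ?C = "P ** Li ** Q - transpose L" and ?D = "P ** Li - ?I"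
  let ?K = "L ** ?A"
  let ?M = "?C - ?D ** ?K"
  have PLL: "P ** Li ** L = P" by (metis LiL matrix_mul_assoc matrix_mul_rid)
  have M: "?M = P + Q - L - transpose L"
    by (simp add: PLL mm_ldiff mm_rdiff mm_ladd mm_radd matrix_mul_assoc LLi LiL)
  have f1: "blk 0 ?B ?M ?D ** blk ?I 0 ?K ?I = blk ?A ?B ?C ?D"
    by (simp add: blk_mult matrix_mul_assoc LiL)
  have f2: "blk ?B 0 ?D ?M ** blk 0 ?I ?I 0 = blk 0 ?B ?M ?D"
    by (simp add: blk_mult)
  have "det (S - mat 1) = det (blk ?B 0 ?D ?M) * det (blk 0 ?I ?I 0 :: real^('n+'n)^('n+'n)) * det (blk ?I 0 ?K ?I)"
    unfolding S_minus_I[OF P Q LLi gen] f1[symmetric] f2[symmetric] det_mul ..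
  also have "\<dots> = det Li * det ?M * (-1) ^ CARD('n)"
    by (simp add: det_blk_lower det_J)
  finally show ?thesis unfolding M by simp
qed



definition negroots :: "real poly \<Rightarrow> nat" where
  "negroots p = (\<Sum>r\<in>{r. r < 0 \<and> poly p r = 0}. order r p)"

lemma poly_sign_neg_roots:
  fixes p :: "real poly"
  assumes "poly p 0 \<noteq> 0" "\<And>r. poly p r = 0 \<Longrightarrow> r < 0 \<Longrightarrow> x < r" "x < 0"
  shows "sgn (poly p x) = sgn (poly p 0) * (-1) ^ negroots p"
  using assms
proof (induct "degree p" arbitrary: p rule: less_induct)
  case less
  show ?case
  proof (cases "\<exists>r. r < 0 \<and> poly p r = 0")
    case False
    then have "{r. r < 0 \<and> poly p r = 0} = {}" by auto
    then have N: "negroots p = 0" unfolding negroots_def by (simp only: sum.empty)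
    have nz: "poly p y \<noteq> 0" if "x \<le> y" "y \<le> 0" for y
      using False less.prems(1) that by (cases "y = 0") auto
    have "sgn (poly p x) = sgn (poly p 0)"
    proof (rule ccontr)
      assume ne: "sgn (poly p x) \<noteq> sgn (poly p 0)"
      have "poly p x * poly p 0 < 0"
        using ne nz[of x] nz[of 0] less.prems(3)
        by (auto simp: sgn_if mult_less_0_iff split: if_splits)
      then obtain y where "x < y" "y < 0" "poly p y = 0" using poly_IVT[OF less.prems(3)] by blast
      then show False using nz[of y] by simp
    qed
    then show ?thesis by (simp add: N)
  next
    case True
    then obtain r where r: "r < 0" "poly p r = 0" by blast
    obtain q where pq: "p = [:-r, 1:] * q" using r(2) poly_eq_0_iff_dvd by (metis dvdE)
    have p0: "p \<noteq> 0" using less.prems(1) by auto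
    then have q0: "q \<noteq> 0" using pq by auto
    have "degree p = degree [:-r, 1:] + degree q" unfolding pq by (rule degree_mult_eq) (use q0 in auto)
    then have dq: "degree q < degree p" by simp
    have q00: "poly q 0 \<noteq> 0" using less.prems(1) pq by simp
    have qroots: "poly q s = 0 \<Longrightarrow> s < 0 \<Longrightarrow> x < s" for s
      using less.prems(2)[of s] pq by simp
    have IH: "sgn (poly q x) = sgn (poly q 0) * (-1) ^ negroots q"
      by (rule less.hyps[OF dq q00 qroots less.prems(3)])
    let ?R = "{s. s < 0 \<and> poly p s = 0}"
    have fin: "finite ?R" using poly_roots_finite[OF p0] by (rule finite_subset[rotated]) auto
    have ordp: "order s p = order s q + (if s = r then 1 else 0)" for s
    proof -
      have "order s p = order s [:-r,1:] + order s q" using pq p0 order_mult by metis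
      moreover have "order s [:-r,1:] = (if s = r then 1 else 0)"
      proof (cases "s = r")
        case True then show ?thesis using order_power_n_n[of r 1] by simp
      next
        case False then have "poly [:-r,1:] s \<noteq> 0" by simp
        then show ?thesis using False order_0I[of "[:-r,1:]" s] by simp
      qed
      ultimately show ?thesis by simp
    qed
    have "negroots q = (\<Sum>s\<in>?R. order s q)"
      unfolding negroots_def
    proof (rule sum.mono_neutral_left[OF fin])
      show "{s. s < 0 \<and> poly q s = 0} \<subseteq> ?R" using pq by auto
      show "\<forall>i\<in>?R - {s. s < 0 \<and> poly q s = 0}. order i q = 0"
        using order_0I[of q] by auto
    qed
    moreover have "negroots p = (\<Sum>s\<in>?R. order s q) + 1"
      unfolding negroots_def ordp sum.distrib using fin r by (simp add: sum.delta)
    ultimately have N: "negroots p = negroots q + 1" by simp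
    have e1: "poly p x = (x - r) * poly q x" unfolding pq by (simp add: algebra_simps)
    have "sgn (x - r) = -1" using less.prems(2)[OF r(2) r(1)] by simp
    then have sx: "sgn (poly p x) = - sgn (poly q x)"
      unfolding e1 sgn_mult by simp
    have e2: "poly p 0 = (- r) * poly q 0" unfolding pq by simp
    have "sgn (- r) = 1" using r(1) by simp
    then have s0: "sgn (poly p 0) = sgn (poly q 0)"
      unfolding e2 sgn_mult by simp
    show ?thesis unfolding sx s0 IH N by simp
  qed
qed



lemma poly_det: "poly (det (A :: real poly^'n^'n)) x = det (\<chi> i j. poly (A$i$j) x)"
  by (simp add: det_def poly_sum poly_prod)

lemma poly_charpoly: "poly (charpoly M) x = det (mat x - M)"
  unfolding charpoly_def poly_det by (rule arg_cong[where f=det]) (auto simp: vec_eq_iff mat_def)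

lemma scaleR_mat_mult: "c *\<^sub>R (A :: real^'n^'n) = mat c ** A"
proof -
  have "mat c = c *\<^sub>R (mat 1 :: real^'n^'n)" by (simp add: vec_eq_iff mat_def)
  then show ?thesis using scalar_matrix_assoc[of c "mat 1 :: real^'n^'n" A] by simp
qed

lemma det_scaleR: "det (c *\<^sub>R (A :: real^'n^'n)) = c ^ CARD('n) * det A"
  by (simp add: scaleR_mat_mult det_mul det_mat_const)

lemma det_large_pos:
  fixes M :: "real^'n^'n"
  shows "\<exists>T>0. \<forall>t\<ge>T. det (mat t + M) > 0"
proof -
  let ?g = "\<lambda>s::real. det (mat 1 + s *\<^sub>R M)"
  have g: "?g = (\<lambda>s. \<Sum>p\<in>{p. p permutes (UNIV::'n set)}. of_int (sign p) * (\<Prod>i\<in>UNIV. (if i = p i then 1 else 0) + s * M$i$p i))"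
    by (rule ext) (simp add: det_def mat_def)
  have "isCont ?g 0" unfolding g by (intro continuous_intros)
  then have "(?g \<longlongrightarrow> ?g 0) (at 0)" by (simp add: isCont_def)
  then have "\<forall>\<^sub>F s in at 0. ?g s > 0" by (rule order_tendstoD) simp
  then obtain d where d: "d > 0" "\<And>s. s \<noteq> 0 \<Longrightarrow> dist s 0 < d \<Longrightarrow> ?g s > 0"
    unfolding eventually_at by auto
  show ?thesis
  proof (intro exI[of _ "2/d"] conjI allI impI)
    show "2/d > 0" using d by simp
    fix t :: real assume t: "2/d \<le> t"
    then have tp: "t > 0" using d(1) by (smt (verit) divide_pos_pos)
    have "1/t \<le> d/2" using t d(1) tp by (simp add: field_simps)
    then have "?g (1/t) > 0" using d tp by (intro d(2)) auto
    moreover have "mat t + M = t *\<^sub>R (mat 1 + (1/t) *\<^sub>R M)"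
      using tp by (simp add: vec_eq_iff mat_def algebra_simps)
    ultimately show "det (mat t + M) > 0" using tp by (simp add: det_scaleR)
  qed
qed




lemma sgn_neg1_pow: "sgn ((-1::real) ^ k) = (-1) ^ k"
  by (induct k) (auto simp: sgn_mult)

lemma parity_aux:
  fixes n N :: nat and m :: int and s :: real
  assumes "s = (-1::real)^n * (if even m then 1 else -1) * (-1)^N"
  shows "(s = 1 \<longrightarrow> (m - int N) mod 2 = int n mod 2) \<and> (s = -1 \<longrightarrow> (m - int N) mod 2 = (int n + 1) mod 2)"
proof -
  define k :: nat where "k = (if even m then 0 else 1)"
  have "(if even m then 1 else -1::real) = (-1)^k" unfolding k_def by simp
  then have s: "s = (-1)^(n + N + k)" using assms by (simp add: power_add)
  have e1: "s = 1 \<Longrightarrow> even (n + N + k)" unfolding s by (metis neg_one_odd_power one_neq_neg_one)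
  have e2: "s = -1 \<Longrightarrow> odd (n + N + k)" unfolding s by (metis neg_one_even_power one_neq_neg_one)
  have km: "even m \<longleftrightarrow> k = 0" "odd m \<longleftrightarrow> k = 1" unfolding k_def by auto
  show ?thesis
  proof (intro conjI impI)
    assume "s = 1" then have "even (n + N + k)" by (rule e1)
    then show "(m - int N) mod 2 = int n mod 2" using km by presburger
  next
    assume "s = -1" then have "odd (n + N + k)" by (rule e2)
    then show "(m - int N) mod 2 = (int n + 1) mod 2" using km by presburger
  qed
qed

lemma sgn_aux:
  fixes a :: real and n N :: nat
  assumes "(-1::real) ^ n = (-1) ^ n * a * (-1) ^ N"
  shows "a = (-1) ^ N"
proof -
  have "a * (-1) ^ N = 1" using assms by (metis mult.assoc mult_cancel_left1 power_eq_0_iff neg_equal_0_iff_equal one_neq_zero)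
  then have "a * (-1) ^ N * (-1) ^ N = (-1) ^ N" by simp
  moreover have "(-1::real) ^ N * (-1) ^ N = 1" by (simp flip: power_add)
  ultimately show ?thesis by (simp add: mult.assoc)
qed

theorem mainTheorem5:
  fixes P L Q :: "real^'n^'n" and S :: "real^('n+'n)^('n+'n)" and m :: int
  assumes "transpose P = P" and "transpose Q = Q"
    and "invertible L"
    and "even m \<longleftrightarrow> det L > 0"
    and "generated_by S P L Q"
    and "det (S - mat 1) \<noteq> 0"
  shows "(det (S - mat 1) > 0 \<longrightarrow> nu_index m P L Q mod 2 = int CARD('n) mod 2) \<and>
         (det (S - mat 1) < 0 \<longrightarrow> nu_index m P L Q mod 2 = (int CARD('n) + 1) mod 2)"
proof -
  obtain Li where LLi: "L ** Li = mat 1" and LiL: "Li ** L = mat 1"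
    using assms(3) unfolding invertible_def by blast
  define M where "M = P + Q - L - transpose L"
  define n where "n = CARD('n)"
  define N where "N = Inert M"
  have dS: "det (S - mat 1) = (-1) ^ n * det Li * det M"
    unfolding M_def n_def by (rule det_S_minus_I[OF assms(1,2) LLi LiL assms(5)])
  have dLLi: "det L * det Li = 1" using det_mul[of L Li] LLi by simp
  have "0 < det L * det Li" unfolding dLLi by simp
  then have "(0 < det L \<and> 0 < det Li) \<or> (det L < 0 \<and> det Li < 0)" by (simp only: zero_less_mult_iff)
  then have sLi: "sgn (det Li) = sgn (det L)" by auto
  have dM: "det M \<noteq> 0" using assms(6) unfolding dS by simp
  define p where "p = charpoly M"
  have p0: "poly p 0 = (-1) ^ n * det M"
    unfolding p_def poly_charpoly n_def by (simp add: det_neg)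
  then have p0nz: "poly p 0 \<noteq> 0" using dM by simp
  then have pnz: "p \<noteq> 0" by auto
  define R where "R = {r. poly p r = 0}"
  have finR: "finite R" unfolding R_def using poly_roots_finite[OF pnz] .
  obtain T where T: "T > 0" "\<And>t. t \<ge> T \<Longrightarrow> det (mat t + M) > 0"
    using det_large_pos[of M] by blast
  define x where "x = - T - 1 - (\<Sum>r\<in>R. \<bar>r\<bar>)"
  have sumpos: "(\<Sum>r\<in>R. \<bar>r\<bar>) \<ge> 0" by (simp add: sum_nonneg)
  have xneg: "x < 0" unfolding x_def using T(1) sumpos by linarith
  have xroots: "x < r" if "poly p r = 0" "r < 0" for r
  proof -
    have "\<bar>r\<bar> \<le> (\<Sum>r\<in>R. \<bar>r\<bar>)"
      using finR that(1) by (intro member_le_sum) (auto simp: R_def)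
    then show ?thesis unfolding x_def using T(1) by linarith
  qed
  have mx: "mat x - M = - (mat (-x) + M)" by (simp add: vec_eq_iff mat_def)
  have px: "poly p x = (-1) ^ n * det (mat (-x) + M)"
    unfolding p_def poly_charpoly n_def mx by (rule det_neg)
  have "T \<le> -x" unfolding x_def using sumpos by linarith
  then have "det (mat (-x) + M) > 0" using T(2) by blast
  then have spx: "sgn (poly p x) = (-1) ^ n" unfolding px by (simp add: sgn_mult)
  have key: "sgn (poly p x) = sgn (poly p 0) * (-1) ^ negroots p"
    by (rule poly_sign_neg_roots[OF p0nz xroots xneg])
  have NN: "negroots p = N" unfolding N_def Inert_def p_def negroots_def ..
  have "(-1::real) ^ n = (-1) ^ n * sgn (det M) * (-1) ^ N"
    using key unfolding spx p0 NN sgn_mult by (simp add: sgn_neg1_pow)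
  then have sM: "sgn (det M) = (-1) ^ N"
    by (rule sgn_aux)
  have sL: "sgn (det L) = (if even m then 1 else -1)"
  proof -
    have "det L \<noteq> 0" using dLLi by (metis mult_zero_left zero_neq_one)
    then show ?thesis using assms(4) by (auto simp: sgn_if)
  qed
  have sS: "sgn (det (S - mat 1)) = (-1) ^ n * (if even m then 1 else -1) * (-1) ^ N"
    unfolding dS sgn_mult sLi sL sM by (simp add: sgn_neg1_pow)
  have nu: "nu_index m P L Q = m - int N" unfolding nu_index_def N_def M_def ..
  from parity_aux[OF sS] have A: "sgn (det (S - mat 1)) = 1 \<longrightarrow> (m - int N) mod 2 = int n mod 2"
    and B: "sgn (det (S - mat 1)) = -1 \<longrightarrow> (m - int N) mod 2 = (int n + 1) mod 2" by blast+
  show ?thesis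
  proof (intro conjI impI)
    assume "det (S - mat 1) > 0"
    then have "sgn (det (S - mat 1)) = 1" by simp
    with A have "(m - int N) mod 2 = int n mod 2" by blast
    then show "nu_index m P L Q mod 2 = int CARD('n) mod 2" unfolding nu n_def .
  next
    assume "det (S - mat 1) < 0"
    then have "sgn (det (S - mat 1)) = -1" by simp
    with B have "(m - int N) mod 2 = (int n + 1) mod 2" by blast
    then show "nu_index m P L Q mod 2 = (int CARD('n) + 1) mod 2" unfolding nu n_def .
  qed
qed

end
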